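(* Let $w,z,f,D,r$ and $S_a$ be as in the context, and let $d\sigma_0$ be the area element of $S_a$ induced by the Euclidean metric. Then there is a constant $C$ independent of $a\ge1$ such that $$\int_{S_a}\frac{f a}{D r^4}\,d\sigma_0\le \frac{C}{a}\qquad\text{and}\qquad \int_{S_a}\frac{f^2a^2w}{D^3r^5}\,d\sigma_0\le\frac{C}{a},$$ where $f=f(a)$ and $w=w(t)$ at the point of parameter $t$.
   Context: Let $l>0$ and $w,z:[0,l]\to\mathbb{R}$ be smooth with the surface of revolution $(w\cos\theta,w\sin\theta,z)$ a smooth closed convex surface diffeomorphic to $\mathbb{S}^2$ with positive Gaussian curvature, $C_1^2\le w^2+z^2\le C_2^2$ ($C_1,C_2>0$), $w'^2+z'^2=1$, $w>0$ on $(0,l)$, $w(0)=w(l)=0$, $z'(0)=z'(l)=0$ ($w$ odd and $z$ even across the endpoints), $z(0)>z(l)$. Let $f(a)\ge1$ for $a\ge1$, $h=f(a)z$, $D=\sqrt{w'^2+f^2z'^2}$, $S_a$ the surface $(aw(t)\cos\theta, aw(t)\sin\theta, ah(t))$, and $r=a\sqrt{w^2+h^2}$ the Euclidean distance to the origin on $S_a$. Note $d\sigma_0=a^2Dw\,dt\,d\theta$. *)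

theory Defs
  imports "HOL-Analysis.Analysis"
begin

definition smooth_fun :: "(real \<Rightarrow> real) \<Rightarrow> bool" where
  "smooth_fun g \<longleftrightarrow> (\<forall>n x. ((deriv ^^ n) g) differentiable (at x))"

(* Gaussian curvature of the surface of revolution (w cos th, w sin th, z) at parameter t
   (valid where w t > 0) *)
definition gauss_curv :: "(real \<Rightarrow> real) \<Rightarrow> (real \<Rightarrow> real) \<Rightarrow> real \<Rightarrow> real" where
  "gauss_curv w z t =
     deriv z t * (deriv w t * deriv (deriv z) t - deriv (deriv w) t * deriv z t)
     / (w t * ((deriv w t)\<^sup>2 + (deriv z t)\<^sup>2)\<^sup>2)"

definition D_fun :: "(real \<Rightarrow> real) \<Rightarrow> (real \<Rightarrow> real) \<Rightarrow> real \<Rightarrow> real \<Rightarrow> real" where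
  "D_fun w z fa t = sqrt ((deriv w t)\<^sup>2 + fa\<^sup>2 * (deriv z t)\<^sup>2)"

definition r_fun :: "(real \<Rightarrow> real) \<Rightarrow> (real \<Rightarrow> real) \<Rightarrow> real \<Rightarrow> real \<Rightarrow> real \<Rightarrow> real" where
  "r_fun w z fa a t = a * sqrt ((w t)\<^sup>2 + (fa * z t)\<^sup>2)"

(* integral over S_a of g(t,theta) with respect to the Euclidean area element
   d sigma_0 = a^2 D w dt dtheta, in the parametrization (a w cos th, a w sin th, a f(a) z) *)
definition surf_int_Sa ::
  "(real \<Rightarrow> real) \<Rightarrow> (real \<Rightarrow> real) \<Rightarrow> real \<Rightarrow> real \<Rightarrow> real \<Rightarrow> (real \<Rightarrow> real \<Rightarrow> real) \<Rightarrow> real" where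
  "surf_int_Sa w z l fa a g =
     integral {0..l} (\<lambda>t. integral {0..2*pi} (\<lambda>\<theta>. g t \<theta> * a\<^sup>2 * D_fun w z fa t * w t))"

end

theory Submission
  imports Defs
begin

lemma pwA:
  fixes F w z C2 d :: real
  assumes "F \<ge> 1" "d > 0" "w^2 \<le> C2^2" "C2 > 0" "\<bar>z\<bar> > d"
  shows "F * w / (w^2 + (F*z)^2)^2 \<le> C2 / d^4"
proof -
  have w: "w \<le> C2" using assms(3,4) abs_le_square_iff[of w C2] by auto
  have "(F*d)^2 \<le> (F*z)^2" using abs_le_square_iff[of "F*d" "F*z"] assms by (auto simp: abs_mult)
  hence P: "(F*d)^2 \<le> w^2 + (F*z)^2" by (smt (verit) zero_le_power2)
  have Fd: "(F*d)^2 > 0" using assms by auto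
  have "F * d^4 \<le> ((F*d)^2)^2"
  proof -
    have "F \<le> F^4" using power_increasing[of 1 4 F] assms by simp
    thus ?thesis using assms by (simp add: power_mult_distrib mult_right_mono power2_eq_square[symmetric] flip: power_mult)
  qed
  also have "\<dots> \<le> (w^2 + (F*z)^2)^2" using P Fd by (intro power_mono) auto
  finally have den: "F * d^4 \<le> (w^2 + (F*z)^2)^2" .
  have pp: "0 < w^2 + (F*z)^2" using P Fd by linarith
  have "F * w / (w^2 + (F*z)^2)^2 \<le> F * C2 / (w^2 + (F*z)^2)^2"
    using w assms Fd P by (intro divide_right_mono) auto
  also have "\<dots> \<le> F * C2 / (F * d^4)"
    using den assms pp by (intro divide_left_mono mult_pos_pos) auto
  also have "\<dots> = C2 / d^4" using assms by simp
  finally show ?thesis .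
qed

lemma pwB:
  fixes F w z zd C2 d mu :: real
  assumes "F \<ge> 1" "d > 0" "w^2 \<le> C2^2" "C2 > 0" "d^2 \<le> w^2" "-zd \<ge> mu" "mu > 0"
  shows "F * w / (w^2 + (F*z)^2)^2 \<le> C2 / ((min (d^2) 1)^2 * mu) * (F * (-zd) / (1 + (F*z)^2))"
proof -
  define e where "e = min (d^2) 1"
  have e: "e > 0" "e \<le> 1" "e \<le> w^2" using assms by (auto simp: e_def)
  have w: "w \<le> C2" using assms(3,4) abs_le_square_iff[of w C2] by auto
  have P: "e * (1 + (F*z)^2) \<le> w^2 + (F*z)^2" using e
    by (smt (verit, best) mult_left_le_one_le zero_le_power2 distrib_left mult.commute mult_cancel_right1)
  have Q: "1 + (F*z)^2 \<ge> 1" by simp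
  have Q0: "0 < 1 + (F*z)^2" by (smt (verit) zero_le_power2)
  have QQ: "1*(1 + (F*z)^2) \<le> (1 + (F*z)^2)*(1 + (F*z)^2)" by (rule mult_right_mono[OF Q]) simp
  have "e^2 * (1 + (F*z)^2) \<le> e^2 * ((1 + (F*z)^2)*(1 + (F*z)^2))"
    using QQ by (intro mult_left_mono) auto
  also have "\<dots> = (e * (1 + (F*z)^2))^2" by (simp add: power2_eq_square)
  finally have "e^2 * (1 + (F*z)^2) \<le> (e * (1 + (F*z)^2))^2" .
  also have "\<dots> \<le> (w^2 + (F*z)^2)^2" using P e Q by (intro power_mono) auto
  finally have den: "e^2 * (1 + (F*z)^2) \<le> (w^2 + (F*z)^2)^2" .
  have pos: "e^2 * (1 + (F*z)^2) > 0" using e by (smt (verit) Q mult_pos_pos zero_less_power)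
  have "F * w / (w^2 + (F*z)^2)^2 \<le> F * C2 / (w^2 + (F*z)^2)^2"
    using w assms pos den by (intro divide_right_mono) auto
  also have "\<dots> \<le> F * C2 / (e^2 * (1 + (F*z)^2))"
    using den assms pos Q0 by (intro divide_left_mono mult_pos_pos) (auto simp del: power_mult_distrib)
  also have "\<dots> \<le> C2 / (e^2 * mu) * (F * (-zd) / (1 + (F*z)^2))"
  proof -
    have "F * C2 / (e^2 * (1 + (F*z)^2)) = C2 / (e^2 * mu) * (F * mu / (1 + (F*z)^2))"
      using e assms Q by (simp add: field_simps)
    also have "\<dots> \<le> C2 / (e^2 * mu) * (F * (-zd) / (1 + (F*z)^2))"
      using assms e Q by (intro mult_left_mono divide_right_mono mult_left_mono) auto
    finally show ?thesis .
  qed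
  finally show ?thesis by (simp add: e_def)
qed

lemma pw2A:
  fixes F w z C2 d Dd :: real
  assumes "F \<ge> 1" "d > 0" "w^2 \<le> C2^2" "C2 > 0" "\<bar>z\<bar> > d" "Dd \<ge> 1"
  shows "F^2 * w^2 / (Dd * sqrt (w^2 + (F*z)^2)^5) \<le> C2^2 / d^5"
proof -
  have "F*d \<le> F * \<bar>z\<bar>" using assms by auto
  also have "\<dots> = sqrt ((F*z)^2)" using assms(1) by (simp add: abs_mult)
  also have "\<dots> \<le> sqrt (w^2 + (F*z)^2)" by simp
  finally have q: "F*d \<le> sqrt (w^2 + (F*z)^2)" .
  have Fd: "F*d > 0" using assms by auto
  have "F^2 * d^5 \<le> (F*d)^5"
  proof -
    have "F^2 \<le> F^5" using assms by (intro power_increasing) auto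
    thus ?thesis using assms by (simp add: power_mult_distrib)
  qed
  also have "\<dots> \<le> sqrt (w^2 + (F*z)^2)^5" using q Fd by (intro power_mono) auto
  also have "\<dots> \<le> Dd * sqrt (w^2 + (F*z)^2)^5"
    using mult_right_mono[of 1 Dd "sqrt (w^2 + (F*z)^2)^5"] assms by simp
  finally have den: "F^2 * d^5 \<le> Dd * sqrt (w^2 + (F*z)^2)^5" .
  have p: "F^2 * d^5 > 0" using assms by auto
  have pp: "0 < w^2 + (F*z)^2" proof -
    have "F*z \<noteq> 0" using assms by auto
    hence "0 < (F*z)^2" by simp
    thus ?thesis by (smt (verit) zero_le_power2)
  qed
  have "F^2 * w^2 / (Dd * sqrt (w^2 + (F*z)^2)^5) \<le> F^2 * C2^2 / (Dd * sqrt (w^2 + (F*z)^2)^5)"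
    using assms den p by (intro divide_right_mono mult_left_mono) auto
  also have "\<dots> \<le> F^2 * C2^2 / (F^2 * d^5)" using den p assms pp by (intro divide_left_mono mult_pos_pos) auto
  also have "\<dots> = C2^2 / d^5" using assms by simp
  finally show ?thesis .
qed

lemma pw2B:
  fixes F w z C2 d Dd mu :: real
  assumes "F \<ge> 1" "d > 0" "w^2 \<le> C2^2" "C2 > 0" "d^2 \<le> w^2" "Dd \<ge> F^2 * mu^2" "mu > 0"
  shows "F^2 * w^2 / (Dd * sqrt (w^2 + (F*z)^2)^5) \<le> C2^2 / (mu^2 * d^5)"
proof -
  have "d = sqrt (d^2)" using assms by simp
  also have "\<dots> \<le> sqrt (w^2 + (F*z)^2)" using assms by (intro real_sqrt_le_mono) (smt (verit) zero_le_power2)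
  finally have q: "d \<le> sqrt (w^2 + (F*z)^2)" .
  have "0 \<le> F^2*mu^2" by simp
  hence "Dd \<ge> 0" using assms(6) by linarith
  have "F^2 * mu^2 * d^5 \<le> Dd * sqrt (w^2 + (F*z)^2)^5"
    using assms q \<open>Dd \<ge> 0\<close> by (intro mult_mono power_mono) auto
  moreover have p: "F^2 * mu^2 * d^5 > 0" using assms by auto
  ultimately have "F^2 * w^2 / (Dd * sqrt (w^2 + (F*z)^2)^5) \<le> F^2 * C2^2 / (F^2 * mu^2 * d^5)"
    using assms by (intro frac_le mult_left_mono) auto
  also have "\<dots> = C2^2 / (mu^2 * d^5)" using assms by simp
  finally show ?thesis .
qed

theorem mainTheorem7:
  fixes w z f :: "real \<Rightarrow> real" and l C1 C2 :: real
  assumes l_pos: "l > 0"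
    and w_smooth: "smooth_fun w" and z_smooth: "smooth_fun z"
    and w_odd0: "\<forall>t. w (- t) = - w t" and w_oddl: "\<forall>t. w (l + t) = - w (l - t)"
    and z_even0: "\<forall>t. z (- t) = z t" and z_evenl: "\<forall>t. z (l + t) = z (l - t)"
    and arclength: "\<forall>t\<in>{0..l}. (deriv w t)\<^sup>2 + (deriv z t)\<^sup>2 = 1"
    and w_pos: "\<forall>t\<in>{0<..<l}. w t > 0"
    and w_end: "w 0 = 0" "w l = 0"
    and z'_end: "deriv z 0 = 0" "deriv z l = 0"
    and z_ends: "z 0 > z l"
    and C_pos: "C1 > 0" "C2 > 0"
    and bounds: "\<forall>t\<in>{0..l}. C1\<^sup>2 \<le> (w t)\<^sup>2 + (z t)\<^sup>2 \<and> (w t)\<^sup>2 + (z t)\<^sup>2 \<le> C2\<^sup>2"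
    and curv_pos: "\<exists>c>0. \<forall>t\<in>{0<..<l}. gauss_curv w z t \<ge> c"
    and f_ge: "\<forall>a\<ge>1. f a \<ge> 1"
  shows "\<exists>C. \<forall>a\<ge>1.
    surf_int_Sa w z l (f a) a
      (\<lambda>t \<theta>. f a * a / (D_fun w z (f a) t * (r_fun w z (f a) a t)^4)) \<le> C / a
  \<and> surf_int_Sa w z l (f a) a
      (\<lambda>t \<theta>. (f a)\<^sup>2 * a\<^sup>2 * w t / ((D_fun w z (f a) t)^3 * (r_fun w z (f a) a t)^5)) \<le> C / a"
proof -
  define d where "d = C1/2"
  have d: "d > 0" using C_pos by (simp add: d_def)
  have wd: "w differentiable at x" for x using w_smooth unfolding smooth_fun_def
    by (metis funpow_0)
  have zd: "z differentiable at x" for x using z_smooth unfolding smooth_fun_def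
    by (metis funpow_0)
  have wdd: "deriv w differentiable at x" for x
  proof -
    have "(deriv ^^ 1) w differentiable at x" using w_smooth unfolding smooth_fun_def by blast
    thus ?thesis by simp
  qed
  have zdd: "deriv z differentiable at x" for x
  proof -
    have "(deriv ^^ 1) z differentiable at x" using z_smooth unfolding smooth_fun_def by blast
    thus ?thesis by simp
  qed
  have cw: "continuous_on S w" for S
    by (intro continuous_at_imp_continuous_on ballI differentiable_imp_continuous_within wd)
  have cz: "continuous_on S z" for S
    by (intro continuous_at_imp_continuous_on ballI differentiable_imp_continuous_within zd)
  have cwd: "continuous_on S (deriv w)" for S
    by (intro continuous_at_imp_continuous_on ballI differentiable_imp_continuous_within wdd)
  have czd: "continuous_on S (deriv z)" for S
    by (intro continuous_at_imp_continuous_on ballI differentiable_imp_continuous_within zdd)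
  have z'ne: "deriv z t \<noteq> 0" if "t \<in> {0<..<l}" for t
  proof
    assume "deriv z t = 0"
    hence "gauss_curv w z t = 0" by (simp add: gauss_curv_def)
    with curv_pos that show False by force
  qed
  have z'neg: "\<forall>t\<in>{0<..<l}. deriv z t < 0"
  proof (rule ccontr)
    assume "\<not> ?thesis"
    then obtain s where s: "s \<in> {0<..<l}" "deriv z s > 0" using z'ne by force
    have allpos: "deriv z t > 0" if t: "t \<in> {0<..<l}" for t
    proof (rule ccontr)
      assume "\<not> deriv z t > 0"
      hence tneg: "deriv z t < 0" using z'ne[OF t] by linarith
      obtain x where x: "min s t \<le> x" "x \<le> max s t" "deriv z x = 0"
      proof (cases "s \<le> t")
        case True
        from IVT'[of "\<lambda>x. - deriv z x" s 0 t] obtain x where "s \<le> x" "x \<le> t" "- deriv z x = 0"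
          using True s tneg by (auto intro!: continuous_intros czd)
        thus ?thesis using that True by auto
      next
        case False
        from IVT'[of "deriv z" t 0 s] obtain x where "t \<le> x" "x \<le> s" "deriv z x = 0"
          using False s tneg czd by auto
        thus ?thesis using that False by auto
      qed
      have "x \<in> {0<..<l}" using x s t by auto
      thus False using z'ne x by blast
    qed
    obtain L \<xi> where \<xi>: "0 < \<xi>" "\<xi> < l" "(z has_real_derivative L) (at \<xi>)" "z l - z 0 = (l - 0) * L"
      using MVT[OF l_pos cz] zd by blast
    have "L = deriv z \<xi>" using \<xi>(3) by (simp add: DERIV_imp_deriv)
    hence "L > 0" using allpos \<xi> by auto
    hence "z l - z 0 > 0" using \<xi>(4) l_pos by simp
    thus False using z_ends by simp
  qed
  have z'np: "deriv z t \<le> 0" if "t \<in> {0..l}" for t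
    using that z'neg z'_end by (cases "t = 0 \<or> t = l") (auto simp: less_le)
  have z0: "\<bar>z 0\<bar> \<ge> C1"
  proof -
    have "C1^2 \<le> (z 0)^2" using bounds[rule_format, of 0] l_pos w_end by simp
    thus ?thesis using C_pos abs_le_square_iff[of C1 "z 0"] by auto
  qed
  have zl: "\<bar>z l\<bar> \<ge> C1"
  proof -
    have "C1^2 \<le> (z l)^2" using bounds[rule_format, of l] l_pos w_end by simp
    thus ?thesis using C_pos abs_le_square_iff[of C1 "z l"] by auto
  qed
  define K where "K = {0..l} \<inter> z -` {-d..d}"
  have cK: "compact K"
  proof -
    have "closed K" unfolding K_def by (intro continuous_closed_preimage cz) auto
    moreover have "bounded K" unfolding K_def by (rule bounded_subset[OF bounded_closed_interval]) auto
    ultimately show ?thesis by (simp add: compact_eq_bounded_closed)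
  qed
  obtain mu where mu: "mu > 0" "\<And>t. t \<in> {0..l} \<Longrightarrow> \<bar>z t\<bar> \<le> d \<Longrightarrow> - deriv z t \<ge> mu"
  proof (cases "K = {}")
    case True
    show ?thesis by (rule that[of 1]) (use True in \<open>auto simp: K_def abs_le_iff\<close>)
  next
    case False
    obtain t0 where t0: "t0 \<in> K" "\<forall>y\<in>K. - deriv z t0 \<le> - deriv z y"
      using continuous_attains_inf[OF cK False, of "\<lambda>t. - deriv z t"] czd
      by (auto intro: continuous_intros)
    have "t0 \<noteq> 0" "t0 \<noteq> l" using t0(1) z0 zl d C_pos by (auto simp: K_def d_def)
    hence "t0 \<in> {0<..<l}" using t0(1) by (auto simp: K_def)
    hence "- deriv z t0 > 0" using z'neg by auto
    show ?thesis by (rule that[of "- deriv z t0"]) (use \<open>- deriv z t0 > 0\<close> t0 in \<open>auto simp: K_def abs_le_iff\<close>)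
  qed
  define e where "e = min (d^2) 1"
  define A where "A = C2/d^4"
  define B where "B = C2/((min (d^2) 1)^2 * mu)"
  define A2 where "A2 = C2^2/d^5 + C2^2/(mu^2*d^5)"
  have A: "A \<ge> 0" using d C_pos by (simp add: A_def)
  have B: "B \<ge> 0" using d C_pos mu by (simp add: B_def)
  have A2: "A2 \<ge> 0" using d C_pos mu by (simp add: A2_def)
  have wsq: "(w t)^2 \<le> C2^2" if "t \<in> {0..l}" for t using bounds that
    by (smt (verit) zero_le_power2)
  have wsmall: "d^2 \<le> (w t)^2" if "t \<in> {0..l}" "\<bar>z t\<bar> \<le> d" for t
  proof -
    have "(z t)^2 \<le> d^2" using that abs_le_square_iff[of "z t" d] d by auto
    moreover have "C1^2 \<le> (w t)^2 + (z t)^2" using bounds that by auto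
    ultimately show ?thesis by (simp add: d_def power_divide, smt (verit) zero_le_power2)
  qed
  show ?thesis
  proof (intro exI allI impI conjI)
    fix a :: real assume a: "1 \<le> a"
    define F where "F = f a"
    have F: "F \<ge> 1" using f_ge a by (simp add: F_def)
    define P where "P t = (w t)^2 + (F * z t)^2" for t
    have P: "P t \<ge> C1^2" if "t \<in> {0..l}" for t
    proof -
      have "(z t)^2 \<le> (F * z t)^2" using F
        by (simp add: power_mult_distrib mult_le_cancel_right1 one_le_power)
      moreover have "C1^2 \<le> (w t)^2 + (z t)^2" using bounds that by auto
      ultimately show ?thesis by (simp add: P_def)
    qed
    have Ppos: "P t > 0" if "t \<in> {0..l}" for t using P[OF that] C_pos
      by (smt (verit) zero_less_power)
    define Dd where "Dd t = (deriv w t)^2 + F^2 * (deriv z t)^2" for t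
    have Dd: "Dd t \<ge> 1" if "t \<in> {0..l}" for t
    proof -
      have "(deriv z t)^2 \<le> F^2 * (deriv z t)^2" using F
        by (simp add: mult_le_cancel_right1 one_le_power)
      moreover have "(deriv w t)^2 + (deriv z t)^2 = 1" using arclength that by auto
      ultimately show ?thesis by (simp add: Dd_def)
    qed
    have wz0: "w t \<noteq> 0 \<or> z t \<noteq> 0" if "t \<in> {0..l}" for t
      using Ppos[OF that] by (auto simp: P_def)
    have Dfun: "D_fun w z F t = sqrt (Dd t)" for t by (simp add: D_fun_def Dd_def)
    have rfun: "r_fun w z F a t = a * sqrt (P t)" for t by (simp add: r_fun_def P_def)
    have a0: "a > 0" using a by simp
    define g where "g t = F * (- deriv z t) / (1 + (F * z t)^2)" for t
    have g0: "g t \<ge> 0" if "t \<in> {0..l}" for t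
    proof -
      have "0 \<le> F * - deriv z t" using z'np[OF that] F by (intro mult_nonneg_nonneg) auto
      moreover have "0 < 1 + (F * z t)^2" by (smt (verit) zero_le_power2)
      ultimately show ?thesis unfolding g_def by (rule divide_nonneg_pos)
    qed
    have gint: "(g has_integral (arctan (F * z 0) - arctan (F * z l))) {0..l}"
    proof -
      have "(g has_integral ((\<lambda>t. - arctan (F * z t)) l - (\<lambda>t. - arctan (F * z t)) 0)) {0..l}"
      proof (rule fundamental_theorem_of_calculus)
        show "0 \<le> l" using l_pos by simp
        fix t assume "t \<in> {0..l}"
        have zt: "(z has_real_derivative deriv z t) (at t)"
          using zd DERIV_deriv_iff_real_differentiable by blast
        have "((\<lambda>t. - arctan (F * z t)) has_real_derivative g t) (at t)"
          unfolding g_def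
          by (rule derivative_eq_intros zt refl | simp add: field_simps power_mult_distrib)+
        thus "((\<lambda>t. - arctan (F * z t)) has_vector_derivative g t) (at t within {0..l})"
          by (simp add: has_real_derivative_iff_has_vector_derivative has_vector_derivative_at_within)
      qed
      thus ?thesis by simp
    qed
    have C_ge: "2*pi*(A*l + B*pi) \<le> 2*pi*(A*l + B*pi) + 2*pi*A2*l"
      "2*pi*A2*l \<le> 2*pi*(A*l + B*pi) + 2*pi*A2*l"
      using A B A2 l_pos by (auto intro!: add_nonneg_nonneg mult_nonneg_nonneg)
    have e1: "surf_int_Sa w z l F a (\<lambda>t \<theta>. F * a / (D_fun w z F t * (r_fun w z F a t)^4))
        = integral {0..l} (\<lambda>t. 2*pi/a * (F * w t / (P t)^2))"
      unfolding surf_int_Sa_def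
    proof (rule integral_cong)
      fix t assume t: "t \<in> {0..l}"
      have s4: "sqrt (P t) ^ 4 = (P t)^2" using Ppos[OF t]
        by (metis less_imp_le power_mult numeral_times_numeral semiring_norm(12) real_sqrt_pow2 num_double)
      have Dp: "sqrt (Dd t) > 0" using Dd[OF t] by simp
      have h4: "a^4 = a * (a * a^2)" by (simp add: eval_nat_numeral)
      show "integral {0..2*pi} (\<lambda>\<theta>. F * a / (D_fun w z F t * r_fun w z F a t ^ 4) * a\<^sup>2 * D_fun w z F t * w t)
          = 2*pi/a * (F * w t / (P t)^2)"
        using Dp a0 Ppos[OF t] h4 by (simp add: Dfun rfun power_mult_distrib s4 field_simps)
    qed
    have hb: "((\<lambda>t. 2*pi/a * (A + B * g t)) has_integral 2*pi/a * (A*l + B * (arctan (F * z 0) - arctan (F * z l)))) {0..l}"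
    proof -
      have hA: "((\<lambda>x. A) has_integral A*l) {0..l}" using has_integral_const_real[of A 0 l] l_pos by (simp add: mult.commute)
      show ?thesis by (intro has_integral_mult_right has_integral_add gint hA)
    qed
    have int1: "integral {0..l} (\<lambda>t. 2*pi/a * (F * w t / (P t)^2))
        \<le> integral {0..l} (\<lambda>t. 2*pi/a * (A + B * g t))"
    proof (rule integral_le)
      show "(\<lambda>t. 2*pi/a * (F * w t / (P t)^2)) integrable_on {0..l}"
        using wz0 F unfolding P_def
        by (intro integrable_continuous_interval continuous_intros cw cz) auto
      show "(\<lambda>t. 2*pi/a * (A + B * g t)) integrable_on {0..l}"
        using hb by blast
      fix t assume t: "t \<in> {0..l}"
      have "F * w t / (P t)^2 \<le> A + B * g t"
      proof (cases "\<bar>z t\<bar> > d")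
        case True
        have "F * w t / (P t)^2 \<le> A" unfolding A_def P_def
          using pwA[OF F d wsq[OF t] C_pos(2) True] .
        thus ?thesis using B g0[OF t] by (smt (verit) mult_nonneg_nonneg)
      next
        case False
        have "F * w t / (P t)^2 \<le> B * g t" unfolding B_def P_def g_def
          using pwB[OF F d wsq[OF t] C_pos(2) wsmall[OF t] mu(2)[OF t] mu(1)] False by simp
        thus ?thesis using A by linarith
      qed
      thus "2*pi/a * (F * w t / (P t)^2) \<le> 2*pi/a * (A + B * g t)"
        using a0 by (intro mult_left_mono) auto
    qed
    have "integral {0..l} (\<lambda>t. 2*pi/a * (A + B * g t)) = 2*pi/a * (A*l + B * (arctan (F * z 0) - arctan (F * z l)))"
      using hb by (rule integral_unique)
    also have "\<dots> \<le> 2*pi/a * (A*l + B*pi)"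
      using arctan_bounded[of "F * z 0"] arctan_bounded[of "F * z l"] B a0
      by (intro mult_left_mono add_left_mono) auto
    also have "\<dots> = (2*pi*(A*l + B*pi)) / a" by simp
    also have "\<dots> \<le> (2*pi*(A*l + B*pi) + 2*pi*A2*l) / a" using C_ge a0 by (intro divide_right_mono) auto
    finally show "surf_int_Sa w z l (f a) a
      (\<lambda>t \<theta>. f a * a / (D_fun w z (f a) t * (r_fun w z (f a) a t)^4)) \<le> (2*pi*(A*l + B*pi) + 2*pi*A2*l) / a"
      using e1 int1 unfolding F_def by linarith
    have e2: "surf_int_Sa w z l F a (\<lambda>t \<theta>. F\<^sup>2 * a\<^sup>2 * w t / ((D_fun w z F t)^3 * (r_fun w z F a t)^5))
        = integral {0..l} (\<lambda>t. 2*pi/a * (F^2 * (w t)^2 / (Dd t * sqrt (P t)^5)))"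
      unfolding surf_int_Sa_def
    proof (rule integral_cong)
      fix t assume t: "t \<in> {0..l}"
      have Dp: "sqrt (Dd t) > 0" using Dd[OF t] by simp
      have D3: "sqrt (Dd t) ^ 3 = Dd t * sqrt (Dd t)" using Dd[OF t]
        by (simp add: power3_eq_cube)
      have Qp: "sqrt (P t) > 0" using Ppos[OF t] by simp
      have h5: "a^5 = a*(a*(a*(a*a)))" by (simp add: eval_nat_numeral)
      show "integral {0..2*pi} (\<lambda>\<theta>. F\<^sup>2 * a\<^sup>2 * w t / (D_fun w z F t ^ 3 * r_fun w z F a t ^ 5) * a\<^sup>2 * D_fun w z F t * w t)
          = 2*pi/a * (F^2 * (w t)^2 / (Dd t * sqrt (P t)^5))"
        using Dp Qp a0 Dd[OF t] h5 by (simp add: Dfun rfun power_mult_distrib D3 field_simps power2_eq_square)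
    qed
    have int2: "integral {0..l} (\<lambda>t. 2*pi/a * (F^2 * (w t)^2 / (Dd t * sqrt (P t)^5)))
        \<le> integral {0..l} (\<lambda>t. 2*pi/a * A2)"
    proof (rule integral_le)
      have "\<forall>t\<in>{0..l}. Dd t * sqrt (P t)^5 \<noteq> 0" using Dd Ppos by (smt (verit) mult_pos_pos real_sqrt_gt_zero zero_less_power)
      thus "(\<lambda>t. 2*pi/a * (F^2 * (w t)^2 / (Dd t * sqrt (P t)^5))) integrable_on {0..l}"
        unfolding P_def Dd_def
        by (intro integrable_continuous_interval continuous_intros cw cz cwd czd) auto
      show "(\<lambda>t. 2*pi/a * A2) integrable_on {0..l}" by (rule integrable_const_ivl)
      fix t assume t: "t \<in> {0..l}"
      have "F^2 * (w t)^2 / (Dd t * sqrt (P t)^5) \<le> A2"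
      proof (cases "\<bar>z t\<bar> > d")
        case True
        have "F^2 * (w t)^2 / (Dd t * sqrt (P t)^5) \<le> C2^2/d^5" unfolding P_def
          using pw2A[OF F d wsq[OF t] C_pos(2) True Dd[OF t]] .
        moreover have "C2^2/(mu^2*d^5) \<ge> 0" using d by simp
        ultimately show ?thesis unfolding A2_def by linarith
      next
        case False
        have m: "mu \<le> - deriv z t" using mu(2)[OF t] False by simp
        have "mu^2 \<le> (deriv z t)^2" using m mu(1) abs_le_square_iff[of mu "deriv z t"] by auto
        hence "F^2 * mu^2 \<le> Dd t" unfolding Dd_def
          by (smt (verit) mult_left_mono zero_le_power2)
        hence "F^2 * (w t)^2 / (Dd t * sqrt (P t)^5) \<le> C2^2/(mu^2*d^5)" unfolding P_def
          using pw2B[OF F d wsq[OF t] C_pos(2) wsmall[OF t] _ mu(1)] False by simp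
        moreover have "C2^2/d^5 \<ge> 0" using d by simp
        ultimately show ?thesis unfolding A2_def by linarith
      qed
      thus "2*pi/a * (F^2 * (w t)^2 / (Dd t * sqrt (P t)^5)) \<le> 2*pi/a * A2"
        using a0 by (intro mult_left_mono) auto
    qed
    have "integral {0..l} (\<lambda>t. 2*pi/a * A2) = (2*pi*A2*l) / a" using l_pos by simp
    also have "\<dots> \<le> (2*pi*(A*l + B*pi) + 2*pi*A2*l) / a" using C_ge a0 by (intro divide_right_mono) auto
    finally show "surf_int_Sa w z l (f a) a
      (\<lambda>t \<theta>. (f a)\<^sup>2 * a\<^sup>2 * w t / ((D_fun w z (f a) t)^3 * (r_fun w z (f a) a t)^5)) \<le> (2*pi*(A*l + B*pi) + 2*pi*A2*l) / a"
      using e2 int2 unfolding F_def by linarith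
  qed
qed

end
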